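(* Let $F$ be a violating edge set and let $(\mathcal{T},\mathcal{M},y)$ be a tree embedding sampled from $\mathcal{D}$. Then with probability at least $\frac12$ the tree is good with respect to $F$, i.e. $y(\mathcal{M}^{-1}(F))\le\frac12$.
   Context: Setting: $G=(V,E)$ is an undirected graph whose edges are partitioned into safe and unsafe edges; $p,q$ are nonnegative integers with $p+q\ge1$; $(s_i,t_i)$, $i\in[k]$, are terminal pairs; $H\subseteq E$ is such that every pair is $(p,q)$-flex-connected in $H$ (every cut $\delta_H(S)$ separating $s_i$ from $t_i$ has at least $p$ safe edges or at least $p+q$ edges). A violating edge set is $F=\delta_H(S)$ for some $S$ separating some pair $(s_i,t_i)$ with $|\delta_H(S)|=p+q$ and at most $p-1$ safe edges in $\delta_H(S)$. Let $\beta\ge1$ and let $\tilde x:E\to\mathbb{R}_{>0}$ be edge capacities with $\tilde x_e=\frac{1}{4(p+q)\beta}$ for every $e\in H$. A tree embedding of $(G,\tilde x)$ is a tree $\mathcal{T}$ with a map $\mathcal{M}_1:V(\mathcal{T})\to V$ that restricts to a bijection between the leaves of $\mathcal{T}$ and $V$, and a map $\mathcal{M}_2$ sending each tree edge $(a,b)$ to a path in $G$ between $\mathcal{M}_1(a)$ and $\mathcal{M}_1(b)$ (write $\mathcal{M}=(\mathcal{M}_1,\mathcal{M}_2)$). Its capacities are $y(f)=\tilde x(\delta_G(A'))$ for $f\in E(\mathcal{T})$, where $A'\subseteq V$ is the set of vertices corresponding to the leaves of one component of $\mathcal{T}-f$. For $e\in E$, $\mathcal{M}^{-1}(e)=\{f\in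 E(\mathcal{T}):e\in\mathcal{M}_2(f)\}$, $\mathrm{load}(e)=\sum_{f\in\mathcal{M}^{-1}(e)}y(f)$, and for $F\subseteq E$, $\mathcal{M}^{-1}(F)=\bigcup_{e\in F}\mathcal{M}^{-1}(e)$. $\mathcal{D}$ is a probability distribution over tree embeddings of $(G,\tilde x)$ such that $\mathbb{E}_{\mathcal{D}}[\mathrm{load}(e)/\tilde x_e]\le\beta$ for every $e\in E$. *)

theory Defs
  imports "HOL-Probability.Probability"
begin

definition graph :: "'v set \<Rightarrow> 'e set \<Rightarrow> ('e \<Rightarrow> 'v set) \<Rightarrow> bool" where
  "graph V E ends \<longleftrightarrow> finite V \<and> finite E \<and>
     (\<forall>e\<in>E. ends e \<subseteq> V \<and> card (ends e) = 2)"

definition cut :: "('e \<Rightarrow> 'v set) \<Rightarrow> 'e set \<Rightarrow> 'v set \<Rightarrow> 'e set" where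
  "cut ends X S = {e\<in>X. (\<exists>u\<in>ends e. u \<in> S) \<and> (\<exists>w\<in>ends e. w \<notin> S)}"

definition separates :: "'v set \<Rightarrow> 'v \<Rightarrow> 'v \<Rightarrow> bool" where
  "separates S s t \<longleftrightarrow> (s \<in> S \<and> t \<notin> S) \<or> (t \<in> S \<and> s \<notin> S)"

definition flex_connected ::
  "'v set \<Rightarrow> ('e \<Rightarrow> 'v set) \<Rightarrow> 'e set \<Rightarrow> nat \<Rightarrow> nat \<Rightarrow> 'e set \<Rightarrow> ('v \<times> 'v) set \<Rightarrow> bool" where
  "flex_connected V ends safe p q H P \<longleftrightarrow>
     (\<forall>(s,t)\<in>P. \<forall>S\<subseteq>V. separates S s t \<longrightarrow>
        card (cut ends H S \<inter> safe) \<ge> p \<or> card (cut ends H S) \<ge> p + q)"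

definition violating ::
  "'v set \<Rightarrow> ('e \<Rightarrow> 'v set) \<Rightarrow> 'e set \<Rightarrow> nat \<Rightarrow> nat \<Rightarrow> 'e set \<Rightarrow> ('v \<times> 'v) set \<Rightarrow> 'e set \<Rightarrow> bool" where
  "violating V ends safe p q H P F \<longleftrightarrow>
     (\<exists>S\<subseteq>V. \<exists>(s,t)\<in>P. separates S s t \<and> F = cut ends H S \<and>
        card (cut ends H S) = p + q \<and> card (cut ends H S \<inter> safe) < p)"

definition adj :: "'n set set \<Rightarrow> ('n \<times> 'n) set" where
  "adj TE = {(a,b). {a,b} \<in> TE \<and> a \<noteq> b}"

definition reach :: "'n set set \<Rightarrow> 'n \<Rightarrow> 'n \<Rightarrow> bool" where
  "reach TE a b \<longleftrightarrow> (a,b) \<in> (adj TE)\<^sup>*"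

definition is_tree :: "'n set \<Rightarrow> 'n set set \<Rightarrow> bool" where
  "is_tree N TE \<longleftrightarrow> finite N \<and> N \<noteq> {} \<and>
     (\<forall>f\<in>TE. f \<subseteq> N \<and> card f = 2) \<and>
     (\<forall>a\<in>N. \<forall>b\<in>N. reach TE a b) \<and>
     (\<forall>f\<in>TE. \<forall>a\<in>f. \<forall>b\<in>f. a \<noteq> b \<longrightarrow> \<not> reach (TE - {f}) a b)"

text \<open>Leaves: nodes of degree at most 1 (degree 0 only in the one-node tree).\<close>
definition leaves :: "'n set \<Rightarrow> 'n set set \<Rightarrow> 'n set" where
  "leaves N TE = {a\<in>N. card {f\<in>TE. a \<in> f} \<le> 1}"

definition is_path :: "'v set \<Rightarrow> 'e set \<Rightarrow> ('e \<Rightarrow> 'v set) \<Rightarrow> 'v \<Rightarrow> 'v \<Rightarrow> 'e list \<Rightarrow> bool" where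
  "is_path V E ends u v es \<longleftrightarrow>
     (\<exists>vs. length vs = length es + 1 \<and> hd vs = u \<and> last vs = v \<and> distinct vs \<and>
        set vs \<subseteq> V \<and> set es \<subseteq> E \<and>
        (\<forall>i<length es. ends (es ! i) = {vs ! i, vs ! Suc i}))"

type_synonym ('n,'v,'e) tree_emb = "'n set \<times> 'n set set \<times> ('n \<Rightarrow> 'v) \<times> ('n set \<Rightarrow> 'e list)"

definition tree_embedding :: "'v set \<Rightarrow> 'e set \<Rightarrow> ('e \<Rightarrow> 'v set) \<Rightarrow> ('n,'v,'e) tree_emb \<Rightarrow> bool" where
  "tree_embedding V E ends \<tau> \<longleftrightarrow> (case \<tau> of (N, TE, M1, M2) \<Rightarrow>
     is_tree N TE \<and> M1 ` N \<subseteq> V \<and> bij_betw M1 (leaves N TE) V \<and>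
     (\<forall>f\<in>TE. \<exists>a b. f = {a,b} \<and> is_path V E ends (M1 a) (M1 b) (M2 f)))"

text \<open>Capacity y(f) = x(delta_G(A')) where A' is the image of the leaves of
  the component of T - f containing a chosen endpoint of f.\<close>
definition tcap :: "('e \<Rightarrow> 'v set) \<Rightarrow> 'e set \<Rightarrow> ('e \<Rightarrow> real) \<Rightarrow> ('n,'v,'e) tree_emb \<Rightarrow> 'n set \<Rightarrow> real" where
  "tcap ends E x \<tau> f = (case \<tau> of (N, TE, M1, M2) \<Rightarrow>
     (let a = (SOME a. a \<in> f) in
      sum x (cut ends E (M1 ` {l\<in>leaves N TE. reach (TE - {f}) a l}))))"

definition preimage_edges :: "('n,'v,'e) tree_emb \<Rightarrow> 'e set \<Rightarrow> 'n set set" where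
  "preimage_edges \<tau> F = (case \<tau> of (N, TE, M1, M2) \<Rightarrow> {f\<in>TE. \<exists>e\<in>F. e \<in> set (M2 f)})"

definition load :: "('e \<Rightarrow> 'v set) \<Rightarrow> 'e set \<Rightarrow> ('e \<Rightarrow> real) \<Rightarrow> ('n,'v,'e) tree_emb \<Rightarrow> 'e \<Rightarrow> real" where
  "load ends E x \<tau> e = (\<Sum>f\<in>preimage_edges \<tau> {e}. tcap ends E x \<tau> f)"

end

theory Submission
  imports Defs
begin

lemma tcap_nonneg:
  assumes "\<forall>e\<in>E. x e > 0"
  shows "0 \<le> tcap ends E x \<tau> f"
proof -
  obtain N TE M1 M2 where t: "\<tau> = (N, TE, M1, M2)" by (cases \<tau>) auto
  show ?thesis unfolding t tcap_def Let_def
    using assms by (auto intro!: sum_nonneg simp: cut_def less_imp_le)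
qed

lemma preimage_Union: "preimage_edges \<tau> F = (\<Union>e\<in>F. preimage_edges \<tau> {e})"
proof -
  obtain N TE M1 M2 where t: "\<tau> = (N, TE, M1, M2)" by (cases \<tau>) auto
  show ?thesis unfolding t preimage_edges_def by auto
qed

lemma preimage_finite:
  assumes "tree_embedding V E ends \<tau>"
  shows "finite (preimage_edges \<tau> F)"
proof -
  obtain N TE M1 M2 where t: "\<tau> = (N, TE, M1, M2)" by (cases \<tau>) auto
  have "finite N" "\<forall>f\<in>TE. f \<subseteq> N" using assms unfolding t tree_embedding_def is_tree_def by auto
  hence "finite TE" by (meson PowI finite_Pow_iff finite_subset subsetI)
  thus ?thesis unfolding t preimage_edges_def by auto
qed

lemma sum_union_le:
  fixes c :: "'a \<Rightarrow> real"
  assumes "finite F" "\<And>e. e \<in> F \<Longrightarrow> finite (B e)" "\<And>a. 0 \<le> c a"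
  shows "sum c (\<Union>e\<in>F. B e) \<le> (\<Sum>e\<in>F. sum c (B e))"
  using assms(1,2)
proof (induction F rule: finite_induct)
  case empty
  then show ?case by simp
next
  case (insert e F)
  have fin: "finite (\<Union>e\<in>F. B e)" using insert by auto
  have "sum c (\<Union>e'\<in>insert e F. B e') = sum c (B e \<union> (\<Union>e\<in>F. B e))" by simp
  also have "\<dots> \<le> sum c (B e) + sum c (\<Union>e\<in>F. B e)"
    using sum_Un[OF _ fin, of "B e" c] insert assms(3)
    by (simp add: sum_nonneg)
  also have "\<dots> \<le> sum c (B e) + (\<Sum>e\<in>F. sum c (B e))" using insert by simp
  finally show ?case using insert by simp
qed

theorem lemma4p2:
  fixes V :: "'v set" and E :: "'e set" and ends :: "'e \<Rightarrow> 'v set"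
    and safe H F :: "'e set" and p q :: nat and P :: "('v \<times> 'v) set"
    and \<beta> :: real and x :: "'e \<Rightarrow> real"
    and D :: "('n,'v,'e) tree_emb pmf"
  assumes "graph V E ends"
    and "safe \<subseteq> E"
    and "p + q \<ge> 1"
    and "P \<subseteq> V \<times> V"
    and "H \<subseteq> E"
    and "flex_connected V ends safe p q H P"
    and "violating V ends safe p q H P F"
    and "\<beta> \<ge> 1"
    and "\<forall>e\<in>E. x e > 0"
    and "\<forall>e\<in>H. x e = 1 / (4 * real (p + q) * \<beta>)"
    and "\<forall>\<tau>\<in>set_pmf D. tree_embedding V E ends \<tau>"
    and "\<forall>e\<in>E. (\<integral>\<^sup>+ \<tau>. ennreal (load ends E x \<tau> e / x e) \<partial>(measure_pmf D)) \<le> ennreal \<beta>"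
  shows "measure_pmf.prob D
           {\<tau>. (\<Sum>f\<in>preimage_edges \<tau> F. tcap ends E x \<tau> f) \<le> 1/2} \<ge> 1/2"
proof -
  define c where "c = 1 / (4 * real (p + q) * \<beta>)"
  have cpos: "c > 0" unfolding c_def using assms(3,8) by auto
  obtain S where "F = cut ends H S" "card (cut ends H S) = p + q"
    using assms(7) unfolding violating_def by blast
  hence FH: "F \<subseteq> H" and cardF: "card F = p + q" unfolding cut_def by auto
  hence finF: "finite F" using assms(3) by (metis card.infinite not_one_le_zero)
  have FE: "F \<subseteq> E" using FH assms(5) by auto
  have xF: "\<And>e. e \<in> F \<Longrightarrow> x e = c" using FH assms(10) c_def by auto
  define Y where "Y (\<tau>::('n,'v,'e) tree_emb) = (\<Sum>f\<in>preimage_edges \<tau> F. tcap ends E x \<tau> f)" for \<tau>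
  define L where "L (\<tau>::('n,'v,'e) tree_emb) = (\<Sum>e\<in>F. ennreal (load ends E x \<tau> e / x e) * ennreal c)" for \<tau>
  have load_nn: "0 \<le> load ends E x \<tau> e" for \<tau> e
    unfolding load_def by (intro sum_nonneg tcap_nonneg[OF assms(9)])
  have YL: "ennreal (Y \<tau>) \<le> L \<tau>" if "\<tau> \<in> set_pmf D" for \<tau>
  proof -
    have fin: "finite (preimage_edges \<tau> G)" for G
      using preimage_finite assms(11) that by blast
    have "Y \<tau> \<le> (\<Sum>e\<in>F. load ends E x \<tau> e)"
      unfolding Y_def load_def
      apply (subst preimage_Union)
      apply (rule sum_union_le[OF finF fin])
      by (rule tcap_nonneg[OF assms(9)])
    also have "\<dots> = (\<Sum>e\<in>F. load ends E x \<tau> e / x e * c)"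
      using xF cpos by (intro sum.cong) auto
    finally have "ennreal (Y \<tau>) \<le> ennreal (\<Sum>e\<in>F. load ends E x \<tau> e / x e * c)"
      by (rule ennreal_leI)
    also have "\<dots> = L \<tau>"
    proof -
      have ln: "0 \<le> load ends E x \<tau> e / x e" if "e \<in> F" for e
        using load_nn[of \<tau> e] xF[OF that] cpos by simp
      have "ennreal (\<Sum>e\<in>F. load ends E x \<tau> e / x e * c)
          = (\<Sum>e\<in>F. ennreal (load ends E x \<tau> e / x e * c))"
        using ln cpos by (subst sum_ennreal) (auto intro: mult_nonneg_nonneg simp del: times_divide_eq_left)
      also have "\<dots> = (\<Sum>e\<in>F. ennreal (load ends E x \<tau> e / x e) * ennreal c)"
        using ln cpos by (intro sum.cong refl ennreal_mult) auto
      finally show ?thesis by (simp only: L_def)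
    qed
    finally show ?thesis .
  qed
  have intL: "(\<integral>\<^sup>+ \<tau>. L \<tau> \<partial>measure_pmf D) \<le> ennreal (1/4)"
  proof -
    have "(\<integral>\<^sup>+ \<tau>. L \<tau> \<partial>measure_pmf D)
        = (\<Sum>e\<in>F. (\<integral>\<^sup>+ \<tau>. ennreal (load ends E x \<tau> e / x e) \<partial>measure_pmf D) * ennreal c)"
      unfolding L_def by (simp add: nn_integral_sum nn_integral_multc)
    also have "\<dots> \<le> (\<Sum>e\<in>F. ennreal \<beta> * ennreal c)"
      using assms(12) FE by (intro sum_mono mult_right_mono) auto
    also have "\<dots> = ennreal (real (p+q) * \<beta> * c)"
      using cardF cpos assms(8) by (simp add: ennreal_mult ennreal_of_nat_eq_real_of_nat mult.assoc)
    also have "real (p+q) * \<beta> * c = 1/4" unfolding c_def using assms(3,8) by auto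
    finally show ?thesis .
  qed
  have "emeasure (measure_pmf D) {\<tau>. \<not> Y \<tau> \<le> 1/2}
      = emeasure (measure_pmf D) ({\<tau>. \<not> Y \<tau> \<le> 1/2} \<inter> set_pmf D)"
    by (simp add: emeasure_Int_set_pmf)
  also have "\<dots> \<le> emeasure (measure_pmf D) {\<tau>\<in>UNIV. 1 \<le> 2 * L \<tau>}"
  proof (rule emeasure_mono)
    show "{\<tau>. \<not> Y \<tau> \<le> 1 / 2} \<inter> set_pmf D \<subseteq> {\<tau> \<in> UNIV. 1 \<le> 2 * L \<tau>}"
    proof (rule subsetI)
      fix \<tau> assume "\<tau> \<in> {\<tau>. \<not> Y \<tau> \<le> 1 / 2} \<inter> set_pmf D"
      hence "\<not> Y \<tau> \<le> 1/2" "\<tau> \<in> set_pmf D" by auto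
      hence "ennreal (1/2) \<le> L \<tau>" using YL[of \<tau>]
        by (meson ennreal_leI linear order_trans)
      hence "2 * ennreal (1/2) \<le> 2 * L \<tau>" by (simp add: mult_left_mono)
      moreover have "2 * ennreal (1/2) = 1"
        by (metis ennreal_numeral ennreal_mult' mult_numeral_1_right zero_le_numeral nonzero_mult_div_cancel_left zero_neq_numeral times_divide_eq_right ennreal_1)
      ultimately show "\<tau> \<in> {\<tau> \<in> UNIV. 1 \<le> 2 * L \<tau>}" by simp
    qed
  qed simp
  also have "\<dots> \<le> 2 * (\<integral>\<^sup>+ \<tau>. L \<tau> * indicator UNIV \<tau> \<partial>measure_pmf D)"
    by (rule nn_integral_Markov_inequality) auto
  also have "\<dots> \<le> 2 * ennreal (1/4)" using intL by (simp add: mult_left_mono)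
  also have "\<dots> = ennreal (1/2)"
    by (subst ennreal_numeral[symmetric], subst ennreal_mult[symmetric]) auto
  finally have A: "ennreal (measure_pmf.prob D {\<tau>. \<not> Y \<tau> \<le> 1/2}) \<le> ennreal (1/2)"
    by (simp only: measure_pmf.emeasure_eq_measure)
  have "measure_pmf.prob D {\<tau>. \<not> Y \<tau> \<le> 1/2} \<le> 1/2"
    by (rule ennreal_le_iff[THEN iffD1, OF _ A]) simp
  moreover have "measure_pmf.prob D {\<tau>. Y \<tau> \<le> 1/2} = 1 - measure_pmf.prob D {\<tau>. \<not> Y \<tau> \<le> 1/2}"
    using measure_pmf.prob_compl[of "{\<tau>. \<not> Y \<tau> \<le> 1/2}" D]
    by (simp add: set_diff_eq)
  ultimately show ?thesis unfolding Y_def by simp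
qed

end
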